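(* Let $G$ be a graph without isolated vertices and $T$ a solution counting decision tree for $\varphi(G)$. Let $u$ be a node of $T$ labelled by a variable $x$ that is not forced to $1$ by $A_u$, and let $F^u=\varphi(G)|_{A_u}$. Then $|F^u|_{\neg x}|/|F^u|\geq (1/2)^{|N^u(x)|+1}$ and $|F^u|_{x}|/|F^u|\geq 1/2$.
   Context: $\varphi(G)$ is the CNF on variables $V(G)$ with clauses $(u\vee v)$ for $\{u,v\}\in E(G)$. Boolean functions are identified with their sets of satisfying assignments (sets of literals); $F|_S$ is the function on the remaining variables whose satisfying assignments are the $S'$ with $S\cup S'$ satisfying $F$; $|\cdot|$ counts satisfying assignments. Decision tree for $F$ (not constant false): root labelled by some $x\in Var(F)$; for each literal $\ell\in\{x,\neg x\}$ occurring in some satisfying assignment, an outgoing edge labelled $\ell$ whose head is a leaf if $|Var(F)|=1$ and otherwise the root of a decision tree for $F|_\ell$. A solution counting decision tree additionally gives the edge leaving node $w$ with label $\ell$ the weight $|F|_{A_w\cup\{\ell\}}|/|F|_{A_w}|$. $A_w$ is the set of literals labelling the root-$w$ path. A variable $y$ is forced to $1$ by $A_u$ if some neighbour $z$ of $y$ in $G$ has $\neg z\in A_u$. $N^u(y)$ is the set of neighbours $z$ of $y$ that do not occur in $A_u$ and are not forced to $1$ by $A_u$. *)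

theory Defs
  imports Complex_Main
begin

text \<open>Literals over variables 'a: (v, True) is the positive literal v, (v, False) is \<not>v.
A Boolean function is represented by its variable set together with its set of
satisfying assignments (each a set of literals assigning every variable exactly once).\<close>

type_synonym 'a lit = "'a \<times> bool"
type_synonym 'a bfun = "'a set \<times> 'a lit set set"

definition total_on :: "'a set \<Rightarrow> 'a lit set \<Rightarrow> bool" where
  "total_on V S \<longleftrightarrow> S \<subseteq> V \<times> UNIV \<and> (\<forall>v\<in>V. ((v, True) \<in> S) \<noteq> ((v, False) \<in> S))"

definition simple_graph :: "'a set \<Rightarrow> 'a set set \<Rightarrow> bool" where
  "simple_graph V E \<longleftrightarrow> finite V \<and> (\<forall>e\<in>E. e \<subseteq> V \<and> card e = 2)"

definition no_isolated :: "'a set \<Rightarrow> 'a set set \<Rightarrow> bool" where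
  "no_isolated V E \<longleftrightarrow> (\<forall>v\<in>V. \<exists>e\<in>E. v \<in> e)"

text \<open>phi(G): the CNF with a clause (u \<or> v) for each edge {u,v}.\<close>
definition phi :: "'a set \<Rightarrow> 'a set set \<Rightarrow> 'a bfun" where
  "phi V E = (V, {S. total_on V S \<and> (\<forall>u v. {u, v} \<in> E \<longrightarrow> (u, True) \<in> S \<or> (v, True) \<in> S)})"

definition restr :: "'a bfun \<Rightarrow> 'a lit set \<Rightarrow> 'a bfun" where
  "restr F A = (fst F - fst ` A, {S'. total_on (fst F - fst ` A) S' \<and> S' \<union> A \<in> snd F})"

definition nsat :: "'a bfun \<Rightarrow> nat" where
  "nsat F = card (snd F)"

text \<open>Decision trees: a node carries its variable, the subtree along the edge labelled x,
and the subtree along the edge labelled \<not>x (None if that edge is absent).\<close>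
datatype 'a dtree = Leaf | Node 'a "'a dtree option" "'a dtree option"

fun child :: "'a dtree \<Rightarrow> bool \<Rightarrow> 'a dtree option" where
  "child Leaf b = None"
| "child (Node x p n) b = (if b then p else n)"

inductive dtree_for :: "'a bfun \<Rightarrow> 'a dtree \<Rightarrow> bool" where
  "\<lbrakk> snd F \<noteq> {}; x \<in> fst F;
     \<forall>b. (child (Node x p n) b \<noteq> None) = (\<exists>S\<in>snd F. (x, b) \<in> S);
     \<forall>b c. child (Node x p n) b = Some c \<longrightarrow>
        (fst F = {x} \<longrightarrow> c = Leaf) \<and>
        (fst F \<noteq> {x} \<longrightarrow> dtree_for (restr F {(x, b)}) c) \<rbrakk>
   \<Longrightarrow> dtree_for F (Node x p n)"

text \<open>path T A u: u is a node of T and A is the set of literals labelling the root-u path.\<close>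
inductive path :: "'a dtree \<Rightarrow> 'a lit set \<Rightarrow> 'a dtree \<Rightarrow> bool" where
  "path T {} T"
| "\<lbrakk> T = Node x p n; child T b = Some c; path c A u \<rbrakk> \<Longrightarrow> path T (insert (x, b) A) u"

definition forced1 :: "'a set set \<Rightarrow> 'a lit set \<Rightarrow> 'a \<Rightarrow> bool" where
  "forced1 E A y \<longleftrightarrow> (\<exists>z. {y, z} \<in> E \<and> (z, False) \<in> A)"

definition Nu :: "'a set set \<Rightarrow> 'a lit set \<Rightarrow> 'a \<Rightarrow> 'a set" where
  "Nu E A y = {z. {y, z} \<in> E \<and> z \<notin> fst ` A \<and> \<not> forced1 E A z}"

end

theory Submission
  imports Defs
begin

lemma path_Leaf: "path Leaf A u \<Longrightarrow> A = {} \<and> u = Leaf"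
  by (cases rule: path.cases) auto

lemma path_inv:
  "path T A u \<Longrightarrow> dtree_for F T \<Longrightarrow> u = Node x p q \<Longrightarrow>
   (\<exists>S\<in>snd F. A \<subseteq> S) \<and> x \<in> fst F \<and> x \<notin> fst ` A"
proof (induction T A u arbitrary: F rule: path.induct)
  case (1 T)
  then show ?case by (auto elim: dtree_for.cases)
next
  case (2 T x0 p0 n0 b c A u)
  from 2(5) have
    a: "\<forall>b c. child (Node x0 p0 n0) b = Some c \<longrightarrow>
        (fst F = {x0} \<longrightarrow> c = Leaf) \<and>
        (fst F \<noteq> {x0} \<longrightarrow> dtree_for (restr F {(x0, b)}) c)"
    unfolding 2(1) by (subst (asm) dtree_for.simps) blast
  have cs: "child (Node x0 p0 n0) b = Some c" using 2 by simp
  have "fst F \<noteq> {x0}"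
  proof
    assume "fst F = {x0}"
    with a cs have "c = Leaf" by blast
    with 2(3) path_Leaf 2(6) show False by blast
  qed
  with a cs have d: "dtree_for (restr F {(x0, b)}) c" by blast
  from "2.IH"[OF d 2(6)] obtain S' where
    S': "S' \<in> snd (restr F {(x0, b)})" "A \<subseteq> S'"
    and x: "x \<in> fst (restr F {(x0, b)})" "x \<notin> fst ` A" by blast
  from S' have "S' \<union> {(x0,b)} \<in> snd F" by (simp add: restr_def)
  moreover have "insert (x0,b) A \<subseteq> S' \<union> {(x0,b)}" using S' by auto
  moreover from x have "x \<in> fst F" "x \<noteq> x0" by (auto simp: restr_def)
  ultimately show ?case using x by auto
qed

lemma restr_single_card:
  assumes wf: "\<forall>S\<in>snd G. total_on (fst G) S" and x: "x \<in> fst G"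
  shows "nsat (restr G {(x,b)}) = card {S\<in>snd G. (x,b)\<in>S}"
proof -
  have "bij_betw (insert (x,b)) (snd (restr G {(x,b)})) {S\<in>snd G. (x,b)\<in>S}"
  proof (rule bij_betw_byWitness[where f'="\<lambda>S. S - {(x,b)}"])
    show "\<forall>S\<in>snd (restr G {(x, b)}). insert (x, b) S - {(x, b)} = S"
      by (auto simp: restr_def total_on_def)
    show "\<forall>S\<in>{S \<in> snd G. (x, b) \<in> S}. insert (x, b) (S - {(x, b)}) = S" by auto
    show "insert (x, b) ` snd (restr G {(x, b)}) \<subseteq> {S \<in> snd G. (x, b) \<in> S}"
      by (auto simp: restr_def)
    show "(\<lambda>S. S - {(x, b)}) ` {S \<in> snd G. (x, b) \<in> S} \<subseteq> snd (restr G {(x, b)})"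
    proof
      fix S' assume "S' \<in> (\<lambda>S. S - {(x, b)}) ` {S \<in> snd G. (x, b) \<in> S}"
      then obtain S where S: "S \<in> snd G" "(x,b) \<in> S" and S'_def: "S' = S - {(x,b)}" by auto
      from wf S have t: "total_on (fst G) S" by blast
      have "total_on (fst G - {x}) S'"
        unfolding total_on_def S'_def
      proof (intro conjI ballI)
        show "S - {(x, b)} \<subseteq> (fst G - {x}) \<times> UNIV"
        proof
          fix l assume l: "l \<in> S - {(x, b)}"
          obtain v c where lv: "l = (v,c)" by (cases l)
          show "l \<in> (fst G - {x}) \<times> UNIV"
          proof (cases "v = x")
            case True
            with l lv have "c \<noteq> b" "(x,c) \<in> S" by auto
            with S(2) t x show ?thesis unfolding total_on_def
              by (cases b; cases c) auto
          next
            case False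
            with l lv t show ?thesis unfolding total_on_def by auto
          qed
        qed
      next
        fix v assume "v \<in> fst G - {x}"
        with t show "((v, True) \<in> S - {(x, b)}) \<noteq> ((v, False) \<in> S - {(x, b)})"
          unfolding total_on_def by auto
      qed
      moreover have "S' \<union> {(x,b)} = S" using S S'_def by auto
      ultimately show "S' \<in> snd (restr G {(x, b)})" using S x
        by (auto simp: restr_def)
    qed
  qed
  then show ?thesis unfolding nsat_def by (rule bij_betw_same_card)
qed


lemma card_fiber_bound:
  assumes "finite N" "g ` N \<subseteq> M" "finite M"
    and "\<And>t. t \<in> M \<Longrightarrow> card {S\<in>N. g S = t} \<le> m"
  shows "card N \<le> card M * m"
proof -
  have "N = (\<Union>t\<in>M. {S\<in>N. g S = t})" using assms(2) by auto
  hence "card N \<le> (\<Sum>t\<in>M. card {S\<in>N. g S = t})"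
    using card_UN_le[OF assms(3)] by metis
  also have "\<dots> \<le> (\<Sum>t\<in>M. m)" using assms(4) by (intro sum_mono) auto
  finally show ?thesis by (simp add: mult.commute)
qed

lemma total_minus:
  assumes S0t: "total_on V S0" and S0A: "A \<subseteq> S0"
  shows "total_on (V - fst ` A) (S0 - A)"
      unfolding total_on_def
    proof (intro conjI ballI)
      show "S0 - A \<subseteq> (V - fst ` A) \<times> UNIV"
      proof
        fix l assume l: "l \<in> S0 - A"
        obtain v c where lv: "l = (v,c)" by (cases l)
        have vV: "v \<in> V" using l lv S0t unfolding total_on_def by blast
        have "v \<notin> fst ` A"
        proof
          assume "v \<in> fst ` A"
          then obtain c' where c': "(v,c') \<in> A" by (auto simp: image_iff)
          with l lv have "c' \<noteq> c" by blast
          have "(v,True) \<in> S0 \<and> (v,False) \<in> S0"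
          proof (cases c)
            case True with l lv c' S0A \<open>c' \<noteq> c\<close> show ?thesis by auto
          next
            case False with l lv c' S0A \<open>c' \<noteq> c\<close> show ?thesis by auto
          qed
          moreover have "((v,True) \<in> S0) \<noteq> ((v,False) \<in> S0)" using S0t vV unfolding total_on_def by blast
          ultimately show False by blast
        qed
        with vV lv show "l \<in> (V - fst ` A) \<times> UNIV" by simp
      qed
    next
      fix v assume v: "v \<in> V - fst ` A"
      have "(v,True) \<notin> A" "(v,False) \<notin> A" "v \<in> V" using v by (auto simp: image_iff)
      moreover have "((v,True) \<in> S0) \<noteq> ((v,False) \<in> S0)" using S0t \<open>v \<in> V\<close> unfolding total_on_def by blast
      ultimately show "((v, True) \<in> S0 - A) \<noteq> ((v, False) \<in> S0 - A)" by blast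
    qed

lemma total_on_alt: "total_on V S \<longleftrightarrow> S \<subseteq> V \<times> UNIV \<and> (\<forall>v\<in>V. (v,True)\<in>S \<longleftrightarrow> (v,False)\<notin>S)"
  unfolding total_on_def by blast

lemma total_flip: "total_on W S \<Longrightarrow> x \<in> W \<Longrightarrow> total_on W (insert (x,True) (S - {(x,False)}))"
  unfolding total_on_def by blast

lemma total_union: "total_on W S \<Longrightarrow> total_on B A \<Longrightarrow> W \<inter> B = {} \<Longrightarrow> total_on (W \<union> B) (S \<union> A)"
  unfolding total_on_def by blast

lemma total_fstA:
  assumes A: "A \<subseteq> S0" and t: "total_on V S0"
  shows "total_on (fst ` A) A"
  unfolding total_on_def
proof (intro conjI ballI)
  show "A \<subseteq> fst ` A \<times> UNIV"
  proof
    fix l assume l: "l \<in> A"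
    have "fst l \<in> fst ` A" using l by (rule imageI)
    thus "l \<in> fst ` A \<times> UNIV" by (cases l) simp
  qed
next
  fix v assume "v \<in> fst ` A"
  then obtain l where l: "l \<in> A" "v = fst l" by blast
  hence c: "(v, snd l) \<in> A" by simp
  hence vV: "v \<in> V" using A t unfolding total_on_def by blast
  have ne: "((v,True) \<in> S0) \<noteq> ((v,False) \<in> S0)" using t vV unfolding total_on_def by blast
  show "((v, True) \<in> A) \<noteq> ((v, False) \<in> A)"
  proof (cases "snd l")
    case True
    with c have "(v,True) \<in> A" by simp
    moreover have "(v,False) \<notin> A" using calculation ne A by blast
    ultimately show ?thesis by blast
  next
    case False
    with c have "(v,False) \<in> A" by simp
    moreover have "(v,True) \<notin> A" using calculation ne A by blast
    ultimately show ?thesis by blast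
  qed
qed

lemma total_g:
  assumes "total_on W S" "insert x K \<subseteq> W" "x \<notin> K"
  shows "total_on W ((S - (insert x K) \<times> UNIV) \<union> {(x,False)} \<union> K \<times> {True})"
  using assms unfolding total_on_def by blast

theorem lemma10:
  fixes V :: "'a set" and E :: "'a set set" and T u :: "'a dtree" and A :: "'a lit set"
    and x :: 'a and p q :: "'a dtree option"
  assumes "simple_graph V E" and "no_isolated V E"
    and "dtree_for (phi V E) T"
    and "path T A u" and "u = Node x p q"
    and "\<not> forced1 E A x"
  shows "real (nsat (restr (restr (phi V E) A) {(x, False)})) / real (nsat (restr (phi V E) A))
           \<ge> (1/2) ^ (card (Nu E A x) + 1) \<and>
         real (nsat (restr (restr (phi V E) A) {(x, True)})) / real (nsat (restr (phi V E) A))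
           \<ge> 1/2"
proof -
  define F0 where "F0 = phi V E"
  define W where "W = V - fst ` A"
  define G where "G = restr F0 A"
  define NN where "NN = snd G"
  define NT where "NT = {S\<in>NN. (x,True)\<in>S}"
  define NF where "NF = {S\<in>NN. (x,False)\<in>S}"
  define K where "K = Nu E A x"
  define D where "D = insert x K"
  have finV: "finite V" and Ecard: "\<And>e. e \<in> E \<Longrightarrow> e \<subseteq> V \<and> card e = 2"
    using assms(1) unfolding simple_graph_def by auto
  from path_inv[OF assms(4) assms(3)[folded F0_def] assms(5)]
  obtain S0 where S0: "S0 \<in> snd F0" "A \<subseteq> S0" and xV: "x \<in> V" and xA: "x \<notin> fst ` A"
    by (auto simp: F0_def phi_def)
  have S0t: "total_on V S0" using S0 by (simp add: F0_def phi_def)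
  have S0s: "\<And>a b. {a,b} \<in> E \<Longrightarrow> (a,True) \<in> S0 \<or> (b,True) \<in> S0"
    using S0 by (simp add: F0_def phi_def)
  have AV: "A \<subseteq> V \<times> UNIV" using S0t S0 unfolding total_on_def by auto
  have Acons: "\<And>v. \<not> ((v,True)\<in>A \<and> (v,False)\<in>A)"
    using S0t S0 AV unfolding total_on_def by auto
  have fstG: "fst G = W" by (simp add: G_def restr_def F0_def phi_def W_def)
  have memNN: "\<And>S. S \<in> NN \<longleftrightarrow> total_on W S \<and> total_on V (S \<union> A) \<and>
      (\<forall>a b. {a,b} \<in> E \<longrightarrow> (a,True) \<in> S \<union> A \<or> (b,True) \<in> S \<union> A)"
    by (simp add: NN_def G_def restr_def F0_def phi_def W_def)
  have xW: "x \<in> W" using xV xA by (simp add: W_def)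
  have wfG: "\<forall>S\<in>snd G. total_on (fst G) S" using memNN fstG NN_def by auto
  have cT: "nsat (restr G {(x,True)}) = card NT"
    using restr_single_card[OF wfG] xW fstG by (simp add: NT_def NN_def)
  have cF: "nsat (restr G {(x,False)}) = card NF"
    using restr_single_card[OF wfG] xW fstG by (simp add: NF_def NN_def)
  have cN: "nsat G = card NN" by (simp add: nsat_def NN_def)
  have finW: "finite W" using finV by (simp add: W_def)
  have finNN: "finite NN"
  proof (rule finite_subset)
    show "NN \<subseteq> Pow (W \<times> (UNIV::bool set))" using memNN unfolding total_on_def by auto
    show "finite (Pow (W \<times> (UNIV::bool set)))" using finW by simp
  qed
  have NNsplit: "NN = NT \<union> NF" "NT \<inter> NF = {}"
  proof -
    have "(x,True) \<in> S \<or> (x,False) \<in> S" "\<not> ((x,True) \<in> S \<and> (x,False) \<in> S)"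
      if "S \<in> NN" for S
    proof -
      from that memNN have "total_on W S" by blast
      hence "((x,True) \<in> S) \<noteq> ((x,False) \<in> S)" using xW unfolding total_on_def by blast
      thus "(x,True) \<in> S \<or> (x,False) \<in> S" "\<not> ((x,True) \<in> S \<and> (x,False) \<in> S)" by blast+
    qed
    thus "NN = NT \<union> NF" "NT \<inter> NF = {}" unfolding NT_def NF_def by blast+
  qed
  have finNT: "finite NT" and finNF: "finite NF" using finNN unfolding NT_def NF_def by simp_all
  have cNN: "card NN = card NT + card NF"
    using card_Un_disjoint[OF finNT finNF NNsplit(2)] NNsplit(1) by simp
  have S0A: "S0 - A \<in> NN"
  proof -
    have "S0 - A \<union> A = S0" using S0 by auto
    moreover have "total_on W (S0 - A)" unfolding W_def by (rule total_minus[OF S0t S0(2)])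
    ultimately show ?thesis unfolding memNN using S0t S0s by simp
  qed
  hence NNpos: "card NN > 0" using finNN card_gt_0_iff by blast
  have Atot: "total_on (fst ` A) A" by (rule total_fstA[OF S0(2) S0t])
  have WA: "W \<inter> fst ` A = {}" unfolding W_def by blast
  have fAV: "fst ` A \<subseteq> V" using AV by force
  have VWA: "V = W \<union> fst ` A" using fAV unfolding W_def by blast
  have totU: "total_on V (S \<union> A)" if "total_on W S" for S
    using total_union[OF that Atot WA] VWA by simp
  define h where "h S = insert (x,True) (S - {(x,False)})" for S :: "'a lit set"
  have hNT: "h ` NF \<subseteq> NT"
  proof
    fix S' assume "S' \<in> h ` NF"
    then obtain S where S: "S \<in> NF" and S'd: "S' = h S" by blast
    hence SN: "S \<in> NN" unfolding NF_def by blast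
    hence m1: "total_on W S" and
      m3: "\<forall>a b. {a,b} \<in> E \<longrightarrow> (a,True) \<in> S \<union> A \<or> (b,True) \<in> S \<union> A"
      using memNN by blast+
    have t1: "total_on W S'" unfolding S'd h_def by (rule total_flip[OF m1 xW])
    have t2: "total_on V (S' \<union> A)" by (rule totU[OF t1])
    have s3: "\<forall>a b. {a,b} \<in> E \<longrightarrow> (a,True) \<in> S' \<union> A \<or> (b,True) \<in> S' \<union> A"
      using m3 unfolding S'd h_def by blast
    have "S' \<in> NN" using memNN t1 t2 s3 by blast
    moreover have "(x,True) \<in> S'" unfolding S'd h_def by blast
    ultimately show "S' \<in> NT" unfolding NT_def by blast
  qed
  have hinj: "inj_on h NF"
  proof
    fix S1 S2 assume a: "S1 \<in> NF" "S2 \<in> NF" "h S1 = h S2"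
    have "total_on W S1" "total_on W S2" using a memNN unfolding NF_def by blast+
    hence "(x,True) \<notin> S1" "(x,True) \<notin> S2" using a xW
      unfolding NF_def total_on_def by blast+
    hence "S1 = insert (x,False) (h S1 - {(x,True)})" "S2 = insert (x,False) (h S2 - {(x,True)})"
      using a unfolding h_def NF_def by blast+
    thus "S1 = S2" using a(3) by simp
  qed
  have FleT: "card NF \<le> card NT"
    using card_inj_on_le[OF hinj hNT finNT] .
  have finK: "finite K"
  proof (rule finite_subset[OF _ finV])
    show "K \<subseteq> V" unfolding K_def Nu_def using Ecard by blast
  qed
  have xK: "x \<notin> K"
  proof
    assume "x \<in> K"
    hence "{x,x} \<in> E" by (simp add: K_def Nu_def)
    thus False using Ecard[of "{x,x}"] by simp
  qed
  have KW: "K \<subseteq> W" unfolding K_def Nu_def W_def using Ecard by blast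
  have cD: "card D = card K + 1" using finK xK by (simp add: D_def)
  define g where "g S = (S - D \<times> UNIV) \<union> {(x,False)} \<union> K \<times> {True}" for S :: "'a lit set"
  have gNF: "g ` NN \<subseteq> NF"
  proof
    fix S' assume "S' \<in> g ` NN"
    then obtain S where S: "S \<in> NN" and S'd: "S' = g S" by auto
    hence m: "total_on W S" "total_on V (S \<union> A)"
      "\<forall>a b. {a,b} \<in> E \<longrightarrow> (a,True) \<in> S \<union> A \<or> (b,True) \<in> S \<union> A"
      using memNN by blast+
    have DW: "D \<subseteq> W" using KW xW D_def by auto
    have t1: "total_on W S'" unfolding S'd g_def D_def
      by (rule total_g[OF m(1)]) (use DW xK D_def in auto)
    have t2: "total_on V (S' \<union> A)" by (rule totU[OF t1])
    have sat: "\<forall>a b. {a,b} \<in> E \<longrightarrow> (a,True) \<in> S' \<union> A \<or> (b,True) \<in> S' \<union> A"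
    proof (intro allI impI)
      fix a b assume ab: "{a,b} \<in> E"
      have key: "(v,True) \<in> S' \<union> A" if xv: "{x,v} \<in> E" for v
      proof (cases "v \<in> fst ` A")
        case True
        then obtain c where "(v,c) \<in> A" by auto
        moreover have "(v,False) \<notin> A" using assms(6) xv unfolding forced1_def by blast
        ultimately show ?thesis by (cases c) auto
      next
        case False
        show ?thesis
        proof (cases "v \<in> K")
          case True thus ?thesis by (simp add: S'd g_def)
        next
          case nK: False
          with False xv have "forced1 E A v" by (simp add: K_def Nu_def)
          then obtain z where z: "{v,z} \<in> E" "(z,False) \<in> A" unfolding forced1_def by blast
          from m(3) z(1) have "(v,True) \<in> S \<union> A \<or> (z,True) \<in> S \<union> A" by blast
          moreover have "(z,True) \<notin> S \<union> A"
          proof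
            assume "(z,True) \<in> S \<union> A"
            moreover have "z \<in> V" using Ecard[OF z(1)] by auto
            ultimately show False using m(2) z(2) unfolding total_on_def by blast
          qed
          ultimately have "(v,True) \<in> S" using False by (auto simp: image_iff)
          moreover have "v \<noteq> x" using xv Ecard[of "{x,v}"] by auto
          ultimately show ?thesis using nK by (simp add: S'd g_def D_def)
        qed
      qed
      show "(a,True) \<in> S' \<union> A \<or> (b,True) \<in> S' \<union> A"
      proof (cases "a = x \<or> b = x")
        case True
        thus ?thesis using key ab by (metis insert_commute)
      next
        case False
        from m(3) ab have "(a,True) \<in> S \<union> A \<or> (b,True) \<in> S \<union> A" by blast
        thus ?thesis using False unfolding S'd g_def D_def by auto
      qed
    qed
    have "(x,False) \<in> S'" by (simp add: S'd g_def)
    thus "S' \<in> NF" using t1 t2 sat memNN by (simp add: NF_def)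
  qed
  have fib: "card {S\<in>NN. g S = t} \<le> 2 ^ (card K + 1)" for t
  proof -
    let ?P = "{S\<in>NN. g S = t}"
    let ?f = "\<lambda>S. {v\<in>D. (v,True) \<in> S}"
    have "inj_on ?f ?P"
    proof
      fix S1 S2 assume a: "S1 \<in> ?P" "S2 \<in> ?P" "?f S1 = ?f S2"
      have t: "total_on W S1" "total_on W S2" using a memNN by blast+
      have oo: "S1 - D \<times> UNIV = S2 - D \<times> UNIV"
      proof -
        have "S1 - D \<times> UNIV = g S1 - D \<times> UNIV" "S2 - D \<times> UNIV = g S2 - D \<times> UNIV"
          unfolding g_def D_def by blast+
        thus ?thesis using a by simp
      qed
      show "S1 = S2"
      proof (rule set_eqI)
        fix l :: "'a lit"
        obtain v c where l: "l = (v,c)" by (cases l)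
        show "l \<in> S1 \<longleftrightarrow> l \<in> S2"
        proof (cases "v \<in> D")
          case False thus ?thesis using oo l by blast
        next
          case True
          hence vW: "v \<in> W" using KW xW D_def by auto
          have "(v,True) \<in> S1 \<longleftrightarrow> (v,True) \<in> S2" using a(3) True by blast
          moreover have "(v,False) \<in> S1 \<longleftrightarrow> (v,True) \<notin> S1"
            "(v,False) \<in> S2 \<longleftrightarrow> (v,True) \<notin> S2" using t vW unfolding total_on_def by blast+
          ultimately show ?thesis using l by (cases c) auto
        qed
      qed
    qed
    moreover have "?f ` ?P \<subseteq> Pow D" by blast
    moreover have "finite (Pow D)" using finK D_def by simp
    ultimately have "card ?P \<le> card (Pow D)" by (rule card_inj_on_le)
    also have "\<dots> = 2 ^ card D" using finK D_def by (simp add: card_Pow)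
    also have "\<dots> = 2 ^ (card K + 1)" using cD by simp
    finally show ?thesis .
  qed
  have NFbound: "card NN \<le> card NF * 2 ^ (card K + 1)"
    by (rule card_fiber_bound[OF finNN gNF finNF fib])
  have r1: "real (card NF) / real (card NN) \<ge> (1/2) ^ (card K + 1)"
  proof -
    have "real (card NN) \<le> real (card NF) * 2 ^ (card K + 1)"
      using NFbound by (metis of_nat_le_iff of_nat_mult of_nat_numeral of_nat_power)
    thus ?thesis using NNpos by (simp add: field_simps power_divide)
  qed
  have r2: "real (card NT) / real (card NN) \<ge> 1/2"
  proof -
    have le: "real (card NN) \<le> 2 * real (card NT)" using cNN FleT by simp
    have pos: "real (card NN) > 0" using NNpos by simp
    show ?thesis using le pos by (simp add: pos_le_divide_eq)
  qed
  show ?thesis using r1 r2 cT cF cN unfolding G_def F0_def K_def by simp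
qed

end
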